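(* For every $m\ge1$, $\psi_{(2^m)}-h_2\psi_{(2^{m-1})}$ is Schur-positive. More generally, for $1\le k\le m$, $\psi_{(2^m)}-h_2^k\psi_{(2^{m-k})}$ is Schur-positive.
   Context: For $j\ge0$, $\psi_{(2^j)}=\sum_{i=0}^jp_2^ip_1^{2j-2i}$ (so $\psi_{(2^0)}=1$), where $p_i$ are power sums; this is the sum of $p_\lambda$ over all partitions $\lambda$ of $2j$ with all parts equal to $1$ or $2$. $h_2$ is the complete homogeneous symmetric function of degree 2. Schur-positive means a nonnegative integer combination of Schur functions. *)

theory Defs
  imports Main "HOL-Library.Poly_Mapping"
begin

(* Polynomials in the variables x_0, x_1, ... with integer coefficients:
  a monomial is an exponent vector (nat \<Rightarrow>0 nat), a polynomial a finitely supported
  map from monomials to coefficients. *)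

type_synonym spoly = "(nat \<Rightarrow>\<^sub>0 nat) \<Rightarrow>\<^sub>0 int"

definition mono :: "(nat \<Rightarrow>\<^sub>0 nat) \<Rightarrow> spoly" where
  "mono \<alpha> = Poly_Mapping.single \<alpha> 1"

definition var_pow :: "nat \<Rightarrow> nat \<Rightarrow> nat \<Rightarrow>\<^sub>0 nat" where
  "var_pow i r = Poly_Mapping.single i r"

definition psum :: "nat \<Rightarrow> nat \<Rightarrow> spoly" where
  "psum N r = (\<Sum>i<N. mono (var_pow i r))"

definition mdeg :: "(nat \<Rightarrow>\<^sub>0 nat) \<Rightarrow> nat" where
  "mdeg \<alpha> = (\<Sum>i\<in>Poly_Mapping.keys \<alpha>. Poly_Mapping.lookup \<alpha> i)"

definition hcomp :: "nat \<Rightarrow> nat \<Rightarrow> spoly" where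
  "hcomp N k = (\<Sum>\<alpha>\<in>{\<alpha>. Poly_Mapping.keys \<alpha> \<subseteq> {..<N} \<and> mdeg \<alpha> = k}. mono \<alpha>)"

definition is_partition :: "nat list \<Rightarrow> bool" where
  "is_partition la \<longleftrightarrow> sorted (rev la) \<and> (\<forall>x\<in>set la. 0 < x)"

definition cells :: "nat list \<Rightarrow> (nat \<times> nat) set" where
  "cells la = {(i, j). i < length la \<and> j < la ! i}"

definition ssyt :: "nat \<Rightarrow> nat list \<Rightarrow> (nat \<times> nat \<Rightarrow> nat) set" where
  "ssyt N la = {T. (\<forall>c. c \<notin> cells la \<longrightarrow> T c = 0)
      \<and> (\<forall>c\<in>cells la. T c < N)
      \<and> (\<forall>i j. (i, j) \<in> cells la \<and> (i, Suc j) \<in> cells la \<longrightarrow> T (i, j) \<le> T (i, Suc j))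
      \<and> (\<forall>i j. (i, j) \<in> cells la \<and> (Suc i, j) \<in> cells la \<longrightarrow> T (i, j) < T (Suc i, j))}"

definition content :: "nat list \<Rightarrow> (nat \<times> nat \<Rightarrow> nat) \<Rightarrow> nat \<Rightarrow>\<^sub>0 nat" where
  "content la T = (\<Sum>c\<in>cells la. Poly_Mapping.single (T c) 1)"

definition schur :: "nat \<Rightarrow> nat list \<Rightarrow> spoly" where
  "schur N la = (\<Sum>T\<in>ssyt N la. mono (content la T))"

definition schur_positive :: "nat \<Rightarrow> spoly \<Rightarrow> bool" where
  "schur_positive N f \<longleftrightarrow> (\<exists>S c. finite S \<and> (\<forall>la\<in>S. is_partition la) \<and>
      f = (\<Sum>la\<in>S. of_nat (c la) * schur N la))"

definition psi2 :: "nat \<Rightarrow> nat \<Rightarrow> spoly" where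
  "psi2 N j = (\<Sum>i\<le>j. psum N 2 ^ i * psum N 1 ^ (2 * j - 2 * i))"

end

theory Submission
  imports Defs
begin


definition rowlen :: "nat list \<Rightarrow> nat \<Rightarrow> nat" where
  "rowlen la i = (if i < length la then la ! i else 0)"

lemma cells_iff: "(i, j) \<in> cells la \<longleftrightarrow> j < rowlen la i"
  by (auto simp: cells_def rowlen_def)

lemma part_iff: "is_partition la \<longleftrightarrow>
   (\<forall>i. rowlen la (Suc i) \<le> rowlen la i) \<and> (\<forall>i<length la. 0 < la ! i)"
  unfolding is_partition_def sorted_rev_iff_nth_Suc rowlen_def
  by (auto simp: in_set_conv_nth)

lemma part_mono: assumes "is_partition la" "i \<le> j" shows "rowlen la j \<le> rowlen la i"
  using assms(2)
proof (induction j rule: dec_induct)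
  case (step n)
  then show ?case using assms(1) by (metis part_iff order_trans)
qed simp

lemma rowlen_pos: "is_partition la \<Longrightarrow> i < length la \<Longrightarrow> 0 < rowlen la i"
  by (auto simp: part_iff rowlen_def)

lemma rowlen_ge: "i \<ge> length la \<Longrightarrow> rowlen la i = 0"
  by (simp add: rowlen_def)

definition addbox :: "nat list \<Rightarrow> nat \<Rightarrow> nat list" where
  "addbox la r = (if r < length la then la[r := Suc (la ! r)] else la @ [1])"

definition addable :: "nat list \<Rightarrow> nat \<Rightarrow> bool" where
  "addable la r \<longleftrightarrow> r \<le> length la \<and> (r = 0 \<or> rowlen la r < rowlen la (r - 1))"

lemma rowlen_addbox: "r \<le> length la \<Longrightarrow>
  rowlen (addbox la r) i = (if i = r then Suc (rowlen la r) else rowlen la i)"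
  by (auto simp: addbox_def rowlen_def nth_append)

lemma length_addbox: "r \<le> length la \<Longrightarrow> length (addbox la r) = (if r < length la then length la else Suc (length la))"
  by (auto simp: addbox_def)

lemma addbox_part: assumes "is_partition la" "addable la r" shows "is_partition (addbox la r)"
proof -
  have r: "r \<le> length la" using assms(2) by (simp add: addable_def)
  have "rowlen (addbox la r) (Suc i) \<le> rowlen (addbox la r) i" for i
  proof -
    have m: "rowlen la (Suc i) \<le> rowlen la i" using assms(1) by (simp add: part_iff)
    show ?thesis
    proof (cases "Suc i = r")
      case True then show ?thesis using assms(2) m by (auto simp: rowlen_addbox[OF r] addable_def)
    qed (use m in \<open>auto simp: rowlen_addbox[OF r]\<close>)
  qed
  moreover have "\<forall>i<length (addbox la r). 0 < addbox la r ! i"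
  proof (intro allI impI)
    fix i assume i: "i < length (addbox la r)"
    have "0 < rowlen (addbox la r) i"
      using i r rowlen_pos[OF assms(1), of i] by (auto simp: rowlen_addbox length_addbox split: if_splits)
    then show "0 < addbox la r ! i" using i by (simp add: rowlen_def)
  qed
  ultimately show ?thesis by (simp add: part_iff)
qed

lemma finite_addable: "finite {r. addable la r}"
  by (rule finite_subset[of _ "{..length la}"]) (auto simp: addable_def)


lemma ssyt_iff: "T \<in> ssyt N la \<longleftrightarrow>
   (\<forall>i j. rowlen la i \<le> j \<longrightarrow> T (i, j) = 0) \<and>
   (\<forall>i j. j < rowlen la i \<longrightarrow> T (i, j) < N) \<and>
   (\<forall>i j. Suc j < rowlen la i \<longrightarrow> T (i, j) \<le> T (i, Suc j)) \<and>
   (\<forall>i j. j < rowlen la i \<and> j < rowlen la (Suc i) \<longrightarrow> T (i, j) < T (Suc i, j))"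
  unfolding ssyt_def by (auto simp: not_less split_paired_All Ball_def cells_iff)

lemma ssyt_zero: "T \<in> ssyt N la \<Longrightarrow> rowlen la i \<le> j \<Longrightarrow> T (i, j) = 0"
  by (simp add: ssyt_iff)
lemma ssyt_N: "T \<in> ssyt N la \<Longrightarrow> j < rowlen la i \<Longrightarrow> T (i, j) < N"
  by (simp add: ssyt_iff)
lemma ssyt_col: "T \<in> ssyt N la \<Longrightarrow> j < rowlen la (Suc i) \<Longrightarrow> is_partition la \<Longrightarrow> T (i, j) < T (Suc i, j)"
proof -
  assume a: "T \<in> ssyt N la" "j < rowlen la (Suc i)" "is_partition la"
  then have "j < rowlen la i" using part_iff[of la] less_le_trans by blast
  then show ?thesis using a by (simp add: ssyt_iff)
qed
lemma ssyt_row: assumes "T \<in> ssyt N la" "j \<le> j'" "j' < rowlen la i" shows "T (i, j) \<le> T (i, j')"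
  using assms(2,3)
proof (induction j' rule: dec_induct)
  case (step n)
  then show ?case using assms(1) by (auto simp: ssyt_iff intro: order_trans)
qed simp

definition bcol :: "nat list \<Rightarrow> (nat \<times> nat \<Rightarrow> nat) \<Rightarrow> nat \<Rightarrow> nat \<Rightarrow> nat" where
  "bcol la T i x = (if \<exists>c<rowlen la i. x < T (i, c) then LEAST c. c < rowlen la i \<and> x < T (i, c) else rowlen la i)"

lemma bcol_le: "bcol la T i x \<le> rowlen la i"
proof (cases "\<exists>c<rowlen la i. x < T (i, c)")
  case True
  then obtain c where "c < rowlen la i \<and> x < T (i, c)" by blast
  then have "(LEAST c. c < rowlen la i \<and> x < T (i, c)) \<le> c" by (rule Least_le)
  then show ?thesis using True \<open>c < rowlen la i \<and> x < T (i, c)\<close> by (simp add: bcol_def)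
qed (auto simp: bcol_def)

lemma bcol_lt: assumes "bcol la T i x < rowlen la i"
  shows "x < T (i, bcol la T i x)" "\<And>c'. c' < bcol la T i x \<Longrightarrow> T (i, c') \<le> x"
proof -
  have ex: "\<exists>c<rowlen la i. x < T (i, c)" using assms by (auto simp: bcol_def split: if_splits)
  then obtain c where c: "c < rowlen la i \<and> x < T (i, c)" by blast
  have "bcol la T i x = (LEAST c. c < rowlen la i \<and> x < T (i, c))" using ex by (simp add: bcol_def)
  then show "x < T (i, bcol la T i x)" using LeastI[of "\<lambda>c. c < rowlen la i \<and> x < T (i, c)", OF c] by simp
  fix c' assume "c' < bcol la T i x"
  then show "T (i, c') \<le> x"
    using \<open>bcol la T i x = _\<close> not_less_Least[of c' "\<lambda>c. c < rowlen la i \<and> x < T (i, c)"] assms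
    by auto
qed

lemma bcol_eq: assumes "bcol la T i x = rowlen la i" "c < rowlen la i" shows "T (i, c) \<le> x"
proof (rule ccontr)
  assume "\<not> T (i, c) \<le> x"
  then have c: "c < rowlen la i \<and> x < T (i, c)" using assms(2) by simp
  then have "bcol la T i x = (LEAST c. c < rowlen la i \<and> x < T (i, c))" by (auto simp: bcol_def)
  also have "\<dots> \<le> c" using c by (rule Least_le)
  finally show False using assms by simp
qed

lemma bcol_eqI: "(\<And>c. c < rowlen la i \<Longrightarrow> T (i, c) \<le> x) \<Longrightarrow> bcol la T i x = rowlen la i"
  by (auto simp: bcol_def not_less[symmetric])

lemma bcol_eqI2: "c < rowlen la i \<Longrightarrow> x < T (i, c) \<Longrightarrow> (\<And>c'. c' < c \<Longrightarrow> T (i, c') \<le> x) \<Longrightarrow> bcol la T i x = c"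
  unfolding bcol_def
  by (auto intro!: Least_equality simp: not_less[symmetric])

function ins :: "nat list \<Rightarrow> (nat \<times> nat \<Rightarrow> nat) \<Rightarrow> nat \<Rightarrow> nat \<Rightarrow> (nat \<times> nat \<Rightarrow> nat) \<times> nat" where
  "ins la T i x = (let c = bcol la T i x in
     if c < rowlen la i then ins la (T((i, c) := x)) (Suc i) (T (i, c)) else (T((i, c) := x), i))"
  by pat_completeness auto
termination
  by (relation "measure (\<lambda>(la, T, i, x). length la - i)") (auto simp: rowlen_def split: if_splits)

declare ins.simps[simp del]

lemma ins_bump: "bcol la T i x < rowlen la i \<Longrightarrow>
   ins la T i x = ins la (T((i, bcol la T i x) := x)) (Suc i) (T (i, bcol la T i x))"
  by (subst ins.simps) (simp add: Let_def)

lemma ins_stop: "bcol la T i x = rowlen la i \<Longrightarrow>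
   ins la T i x = (T((i, rowlen la i) := x), i)"
  by (subst ins.simps) (simp add: Let_def)

lemma ins_ge: "ins la T i x = (U, r) \<Longrightarrow> i \<le> r"
proof (induction la T i x rule: ins.induct)
  case (1 la T i x)
  show ?case
  proof (cases "bcol la T i x < rowlen la i")
    case True
    have "ins la (T((i, bcol la T i x) := x)) (Suc i) (T (i, bcol la T i x)) = (U, r)"
      using 1(2) ins_bump[OF True] by simp
    then have "Suc i \<le> r" by (rule 1(1)[OF refl True])
    then show ?thesis by simp
  next
    case False
    then have "bcol la T i x = rowlen la i" using bcol_le[of la T i x] by simp
    then show ?thesis using 1(2) ins_stop by simp
  qed
qed

lemma ins_keep: "ins la T i x = (U, r) \<Longrightarrow> j < i \<Longrightarrow> U (j, c) = T (j, c)"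
proof (induction la T i x arbitrary: U r rule: ins.induct)
  case (1 la T i x)
  show ?case
  proof (cases "bcol la T i x < rowlen la i")
    case True
    have "ins la (T((i, bcol la T i x) := x)) (Suc i) (T (i, bcol la T i x)) = (U, r)"
      using 1(2) ins_bump[OF True] by simp
    then have "U (j, c) = (T((i, bcol la T i x) := x)) (j, c)" by (rule 1(1)[OF refl True]) (use 1(3) in simp)
    then show ?thesis using 1(3) by simp
  next
    case False
    then have "bcol la T i x = rowlen la i" using bcol_le[of la T i x] by simp
    then show ?thesis using 1 ins_stop by auto
  qed
qed


definition INV :: "nat \<Rightarrow> nat list \<Rightarrow> (nat \<times> nat \<Rightarrow> nat) \<Rightarrow> nat \<Rightarrow> nat \<Rightarrow> bool" where
  "INV N la T i x \<longleftrightarrow> T \<in> ssyt N la \<and> x < N \<and> i \<le> length la \<and>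
    (0 < i \<longrightarrow> (\<exists>j. j < rowlen la (i - 1) \<and> (\<forall>c\<le>j. T (i - 1, c) < x) \<and>
        (\<forall>c. j \<le> c \<and> c < rowlen la i \<longrightarrow> x < T (i, c))))"

lemma upd_ssyt:
  assumes T: "T \<in> ssyt N la" and c: "c < rowlen la i" and v: "v < N"
    and l: "0 < c \<Longrightarrow> T (i, c - 1) \<le> v"
    and r: "Suc c < rowlen la i \<Longrightarrow> v \<le> T (i, Suc c)"
    and a: "0 < i \<Longrightarrow> T (i - 1, c) < v"
    and b: "c < rowlen la (Suc i) \<Longrightarrow> v < T (Suc i, c)"
  shows "T((i, c) := v) \<in> ssyt N la"
proof -
  have T': "(\<forall>i j. rowlen la i \<le> j \<longrightarrow> T (i, j) = 0) \<and>
   (\<forall>i j. j < rowlen la i \<longrightarrow> T (i, j) < N) \<and>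
   (\<forall>i j. Suc j < rowlen la i \<longrightarrow> T (i, j) \<le> T (i, Suc j)) \<and>
   (\<forall>i j. j < rowlen la i \<and> j < rowlen la (Suc i) \<longrightarrow> T (i, j) < T (Suc i, j))"
    using T by (simp add: ssyt_iff)
  show ?thesis unfolding ssyt_iff
  proof (intro conjI allI impI)
    fix i' j assume "rowlen la i' \<le> j" then show "(T((i, c) := v)) (i', j) = 0" using T' c by auto
  next
    fix i' j assume "j < rowlen la i'" then show "(T((i, c) := v)) (i', j) < N" using T' v by auto
  next
    fix i' j assume "Suc j < rowlen la i'" then show "(T((i, c) := v)) (i', j) \<le> (T((i, c) := v)) (i', Suc j)"
      using T' l r by (cases "i' = i"; cases "j = c"; cases "Suc j = c") auto
  next
    fix i' j assume "j < rowlen la i' \<and> j < rowlen la (Suc i')"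
    then show "(T((i, c) := v)) (i', j) < (T((i, c) := v)) (Suc i', j)"
      using T' a b by (cases "i' = i"; cases "j = c"; cases "Suc i' = i") auto
  qed
qed

lemma ins_step_INV:
  assumes part: "is_partition la" and I: "INV N la T i x" and cdef: "c = bcol la T i x"
    and cl: "c < rowlen la i"
  shows "INV N la (T((i, c) := x)) (Suc i) (T (i, c))"
proof -
  have T: "T \<in> ssyt N la" and xN: "x < N" using I by (auto simp: INV_def)
  have xc: "x < T (i, c)" and bef: "\<And>c'. c' < c \<Longrightarrow> T (i, c') \<le> x"
    using bcol_lt[of la T i x] cl cdef by auto
  have above: "T (i - 1, c') < x" if "0 < i" "c' \<le> c" for c'
  proof -
    obtain j where j: "j < rowlen la (i - 1)" "\<forall>c\<le>j. T (i - 1, c) < x"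
      "\<forall>c. j \<le> c \<and> c < rowlen la i \<longrightarrow> x < T (i, c)"
      using I \<open>0 < i\<close> by (auto simp: INV_def)
    have "c \<le> j"
    proof (cases "j < rowlen la i")
      case True
      then have "x < T (i, j)" using j by auto
      then show ?thesis using bef by (meson leD leI)
    next
      case False then show ?thesis using cl by simp
    qed
    then show ?thesis using j that by auto
  qed
  have il: "i < length la" using cl by (auto simp: rowlen_def split: if_splits)
  have S: "T((i, c) := x) \<in> ssyt N la"
  proof (rule upd_ssyt[OF T cl xN])
    show "0 < c \<Longrightarrow> T (i, c - 1) \<le> x" using bef by simp
    show "Suc c < rowlen la i \<Longrightarrow> x \<le> T (i, Suc c)"
      using ssyt_row[OF T, of c "Suc c" i] xc by simp
    show "0 < i \<Longrightarrow> T (i - 1, c) < x" using above by simp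
    show "c < rowlen la (Suc i) \<Longrightarrow> x < T (Suc i, c)"
      using ssyt_col[OF T _ part] xc by (meson less_trans)
  qed
  have "\<forall>c'\<le>c. (T((i, c) := x)) (i, c') < T (i, c)"
    using bef xc by (metis fun_upd_apply le_neq_implies_less le_less_trans prod.inject)
  moreover have "\<forall>c'. c \<le> c' \<and> c' < rowlen la (Suc i) \<longrightarrow> T (i, c) < (T((i, c) := x)) (Suc i, c')"
  proof (intro allI impI)
    fix c' assume h: "c \<le> c' \<and> c' < rowlen la (Suc i)"
    then have "c' < rowlen la i" using part part_iff less_le_trans by blast
    then have "T (i, c) \<le> T (i, c')" using ssyt_row[OF T] h by auto
    also have "\<dots> < T (Suc i, c')" using ssyt_col[OF T _ part] h by auto
    finally show "T (i, c) < (T((i, c) := x)) (Suc i, c')" by simp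
  qed
  ultimately show ?thesis using S il cl ssyt_N[OF T cl] unfolding INV_def
    by (intro conjI) (auto intro!: exI[of _ c])
qed

lemma finite_cells: "finite (cells la)"
  by (rule finite_subset[of _ "SIGMA i:{..<length la}. {..<la ! i}"]) (auto simp: cells_def)

lemma cells_addbox: "r \<le> length la \<Longrightarrow> cells (addbox la r) = insert (r, rowlen la r) (cells la)"
  by (auto simp: cells_iff rowlen_addbox split: if_splits)

lemma content_upd: assumes "(i, c) \<in> cells la"
  shows "content la (T((i, c) := v)) + Poly_Mapping.single (T (i, c)) 1 = content la T + Poly_Mapping.single v 1"
proof -
  have "content la T = Poly_Mapping.single (T (i, c)) 1 + (\<Sum>d\<in>cells la - {(i, c)}. Poly_Mapping.single (T d) 1)"
    unfolding content_def using assms finite_cells by (simp add: sum.remove)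
  moreover have "content la (T((i, c) := v)) = Poly_Mapping.single v 1 + (\<Sum>d\<in>cells la - {(i, c)}. Poly_Mapping.single (T d) 1)"
    unfolding content_def using assms finite_cells by (simp add: sum.remove)
  ultimately show ?thesis by (simp add: add_ac)
qed

lemma content_addbox: assumes "r \<le> length la" "T \<in> ssyt N la"
  shows "content (addbox la r) (T((r, rowlen la r) := v)) = content la T + Poly_Mapping.single v 1"
proof -
  have n: "(r, rowlen la r) \<notin> cells la" by (simp add: cells_iff)
  have "content (addbox la r) (T((r, rowlen la r) := v)) =
     Poly_Mapping.single v 1 + (\<Sum>d\<in>cells la. Poly_Mapping.single ((T((r, rowlen la r) := v)) d) 1)"
    unfolding content_def cells_addbox[OF assms(1)] using n finite_cells by simp
  also have "(\<Sum>d\<in>cells la. Poly_Mapping.single ((T((r, rowlen la r) := v)) d) 1) = content la T"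
    unfolding content_def using n by (intro sum.cong) auto
  finally show ?thesis by (simp add: add_ac fun_upd_def)
qed


lemma addcell_ssyt:
  assumes T: "T \<in> ssyt N la" and part: "is_partition la" and ad: "addable la r" and v: "v < N"
    and l: "\<And>c. c < rowlen la r \<Longrightarrow> T (r, c) \<le> v"
    and a: "0 < r \<Longrightarrow> T (r - 1, rowlen la r) < v"
  shows "T((r, rowlen la r) := v) \<in> ssyt N (addbox la r)"
proof -
  have rl: "r \<le> length la" using ad by (simp add: addable_def)
  note rw = rowlen_addbox[OF rl]
  have T': "(\<forall>i j. rowlen la i \<le> j \<longrightarrow> T (i, j) = 0) \<and>
   (\<forall>i j. j < rowlen la i \<longrightarrow> T (i, j) < N) \<and>
   (\<forall>i j. Suc j < rowlen la i \<longrightarrow> T (i, j) \<le> T (i, Suc j)) \<and>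
   (\<forall>i j. j < rowlen la i \<and> j < rowlen la (Suc i) \<longrightarrow> T (i, j) < T (Suc i, j))"
    using T by (simp add: ssyt_iff)
  have ms: "rowlen la (Suc r) \<le> rowlen la r" using part by (simp add: part_iff)
  show ?thesis unfolding ssyt_iff
  proof (intro conjI allI impI)
    fix i' j assume "rowlen (addbox la r) i' \<le> j"
    then show "(T((r, rowlen la r) := v)) (i', j) = 0" using T' by (auto simp: rw split: if_splits)
  next
    fix i' j assume "j < rowlen (addbox la r) i'"
    then show "(T((r, rowlen la r) := v)) (i', j) < N" using T' v by (auto simp: rw split: if_splits)
  next
    fix i' j assume h: "Suc j < rowlen (addbox la r) i'"
    show "(T((r, rowlen la r) := v)) (i', j) \<le> (T((r, rowlen la r) := v)) (i', Suc j)"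
    proof (cases "i' = r")
      case True
      then show ?thesis using h T' l by (cases "Suc j = rowlen la r") (auto simp: rw)
    next
      case False
      then show ?thesis using h T' by (auto simp: rw)
    qed
  next
    fix i' j assume h: "j < rowlen (addbox la r) i' \<and> j < rowlen (addbox la r) (Suc i')"
    show "(T((r, rowlen la r) := v)) (i', j) < (T((r, rowlen la r) := v)) (Suc i', j)"
    proof (cases "i' = r")
      case True
      then show ?thesis using h T' ms by (cases "j = rowlen la r") (auto simp: rw)
    next
      case False
      show ?thesis
      proof (cases "Suc i' = r")
        case True
        then show ?thesis using h T' a False by (cases "j = rowlen la r") (auto simp: rw)
      next
        case False2: False
        then show ?thesis using h T' False by (auto simp: rw)
      qed
    qed
  qed
qed

lemma ins_correct:
  "is_partition la \<Longrightarrow> INV N la T i x \<Longrightarrow> ins la T i x = (U, r) \<Longrightarrow>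
   U \<in> ssyt N (addbox la r) \<and> addable la r \<and>
   content (addbox la r) U = content la T + Poly_Mapping.single x 1"
proof (induction la T i x arbitrary: U r rule: ins.induct)
  case (1 la T i x)
  note part = 1(2) and I = 1(3)
  have T: "T \<in> ssyt N la" and xN: "x < N" and il: "i \<le> length la" using I by (auto simp: INV_def)
  show ?case
  proof (cases "bcol la T i x < rowlen la i")
    case True
    define c where "c = bcol la T i x"
    have cl: "c < rowlen la i" using True c_def by simp
    have I1: "INV N la (T((i, c) := x)) (Suc i) (T (i, c))"
      using ins_step_INV[OF part I c_def cl] .
    have e: "ins la (T((i, c) := x)) (Suc i) (T (i, c)) = (U, r)"
      using 1(4) ins_bump[OF True] c_def by simp
    have IH: "U \<in> ssyt N (addbox la r) \<and> addable la r \<and>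
       content (addbox la r) U = content la (T((i, c) := x)) + Poly_Mapping.single (T (i, c)) 1"
      by (rule 1(1)[OF c_def cl part I1 e])
    have "content la (T((i, c) := x)) + Poly_Mapping.single (T (i, c)) 1 = content la T + Poly_Mapping.single x 1"
      using content_upd[of i c la T x] cl by (simp add: cells_iff)
    then show ?thesis using IH by simp
  next
    case False
    then have ce: "bcol la T i x = rowlen la i" using bcol_le[of la T i x] by simp
    have e: "U = T((i, rowlen la i) := x)" "r = i" using 1(4) ins_stop[OF ce] by auto
    have le: "\<And>c. c < rowlen la i \<Longrightarrow> T (i, c) \<le> x" using bcol_eq[OF ce] .
    have ad: "addable la i"
    proof (cases "i = 0")
      case False
      then obtain j where j: "j < rowlen la (i - 1)" "\<forall>c\<le>j. T (i - 1, c) < x"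
        "\<forall>c. j \<le> c \<and> c < rowlen la i \<longrightarrow> x < T (i, c)"
        using I by (auto simp: INV_def)
      have "rowlen la i \<le> j"
      proof (rule ccontr)
        assume "\<not> rowlen la i \<le> j"
        then have "x < T (i, j)" using j by auto
        then show False using le[of j] \<open>\<not> rowlen la i \<le> j\<close> by simp
      qed
      then show ?thesis using j il by (simp add: addable_def)
    qed (use il in \<open>simp add: addable_def\<close>)
    have ab: "T (i - 1, rowlen la i) < x" if "0 < i"
    proof -
      obtain j where j: "j < rowlen la (i - 1)" "\<forall>c\<le>j. T (i - 1, c) < x"
        "\<forall>c. j \<le> c \<and> c < rowlen la i \<longrightarrow> x < T (i, c)"
        using I \<open>0 < i\<close> by (auto simp: INV_def)
      have "rowlen la i \<le> j"
      proof (rule ccontr)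
        assume "\<not> rowlen la i \<le> j"
        then have "x < T (i, j)" using j by auto
        then show False using le[of j] \<open>\<not> rowlen la i \<le> j\<close> by simp
      qed
      then show ?thesis using j by auto
    qed
    have "U \<in> ssyt N (addbox la r)"
      unfolding e by (rule addcell_ssyt[OF T part ad xN le ab])
    moreover have "content (addbox la r) U = content la T + Poly_Mapping.single x 1"
      unfolding e using content_addbox[OF il T] by simp
    ultimately show ?thesis using ad e by (simp add: fun_upd_def)
  qed
qed


definition rcol :: "nat list \<Rightarrow> (nat \<times> nat \<Rightarrow> nat) \<Rightarrow> nat \<Rightarrow> nat \<Rightarrow> nat" where
  "rcol la U i y = (GREATEST c. c < rowlen la i \<and> U (i, c) < y)"

lemma rcol_props:
  assumes "k < rowlen la i" "U (i, k) < y"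
  shows "rcol la U i y < rowlen la i" "U (i, rcol la U i y) < y" "k \<le> rcol la U i y"
    "\<And>c'. c' < rowlen la i \<Longrightarrow> U (i, c') < y \<Longrightarrow> c' \<le> rcol la U i y"
proof -
  have b: "\<And>c. c < rowlen la i \<and> U (i, c) < y \<Longrightarrow> c \<le> rowlen la i" by simp
  have "rcol la U i y < rowlen la i \<and> U (i, rcol la U i y) < y"
    unfolding rcol_def by (rule GreatestI_nat[of _ k, OF _ b]) (use assms in simp)
  then show "rcol la U i y < rowlen la i" "U (i, rcol la U i y) < y" by auto
  show "k \<le> rcol la U i y"
    unfolding rcol_def by (rule Greatest_le_nat[OF _ b]) (use assms in simp)
  fix c' assume "c' < rowlen la i" "U (i, c') < y"
  then show "c' \<le> rcol la U i y"
    unfolding rcol_def by (intro Greatest_le_nat[OF _ b]) simp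
qed

lemma rcol_eqI: "c < rowlen la i \<Longrightarrow> U (i, c) < y \<Longrightarrow>
   (\<And>c'. c < c' \<Longrightarrow> c' < rowlen la i \<Longrightarrow> y \<le> U (i, c')) \<Longrightarrow> rcol la U i y = c"
  unfolding rcol_def by (rule Greatest_equality) (auto simp: not_less[symmetric])

function rins :: "nat list \<Rightarrow> (nat \<times> nat \<Rightarrow> nat) \<Rightarrow> nat \<Rightarrow> nat \<Rightarrow> nat \<Rightarrow> (nat \<times> nat \<Rightarrow> nat) \<times> nat" where
  "rins la U i k y = (if i < k then (case rins la U (Suc i) k y of (U1, y1) \<Rightarrow>
      (U1((i, rcol la U1 i y1) := y1), U1 (i, rcol la U1 i y1))) else (U, y))"
  by pat_completeness auto
termination
  by (relation "measure (\<lambda>(la, U, i, k, y). k - i)") auto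

declare rins.simps[simp del]

lemma rins_lt: "i < k \<Longrightarrow> rins la U (Suc i) k y = (U1, y1) \<Longrightarrow>
   rins la U i k y = (U1((i, rcol la U1 i y1) := y1), U1 (i, rcol la U1 i y1))"
  by (subst rins.simps) simp

lemma rins_ge: "\<not> i < k \<Longrightarrow> rins la U i k y = (U, y)"
  by (subst rins.simps) simp

lemma rev_step:
  assumes part: "is_partition la" and I: "INV N la U1 (Suc i) y1" and cdef: "c = rcol la U1 i y1"
  shows "c < rowlen la i \<and> INV N la (U1((i, c) := y1)) i (U1 (i, c)) \<and>
     bcol la (U1((i, c) := y1)) i (U1 (i, c)) = c"
proof -
  have U1: "U1 \<in> ssyt N la" and yN: "y1 < N" and il: "Suc i \<le> length la" using I by (auto simp: INV_def)
  obtain j where j: "j < rowlen la i" "\<forall>c\<le>j. U1 (i, c) < y1"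
      "\<forall>c. j \<le> c \<and> c < rowlen la (Suc i) \<longrightarrow> y1 < U1 (Suc i, c)"
    using I by (auto simp: INV_def)
  have jy: "U1 (i, j) < y1" using j by auto
  note rp = rcol_props[of j la i U1 y1, OF j(1) jy, folded cdef]
  have cl: "c < rowlen la i" and cy: "U1 (i, c) < y1" and jc: "j \<le> c" using rp by auto
  have gr: "y1 \<le> U1 (i, c')" if "c < c'" "c' < rowlen la i" for c'
    using rp(4)[of c'] that by force
  have S: "U1((i, c) := y1) \<in> ssyt N la"
  proof (rule upd_ssyt[OF U1 cl yN])
    show "0 < c \<Longrightarrow> U1 (i, c - 1) \<le> y1"
      using ssyt_row[OF U1, of "c - 1" c i] cl cy by simp
    show "Suc c < rowlen la i \<Longrightarrow> y1 \<le> U1 (i, Suc c)" using gr by simp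
    show "0 < i \<Longrightarrow> U1 (i - 1, c) < y1"
      using ssyt_col[OF U1, of c "i - 1"] part cl cy by simp
    show "c < rowlen la (Suc i) \<Longrightarrow> y1 < U1 (Suc i, c)" using j jc by auto
  qed
  have xN: "U1 (i, c) < N" using ssyt_N[OF U1 cl] .
  have ex: "\<exists>j'. j' < rowlen la (i - 1) \<and> (\<forall>c'\<le>j'. (U1((i, c) := y1)) (i - 1, c') < U1 (i, c)) \<and>
        (\<forall>c'. j' \<le> c' \<and> c' < rowlen la i \<longrightarrow> U1 (i, c) < (U1((i, c) := y1)) (i, c'))" if "0 < i"
  proof (intro exI[of _ c] conjI allI impI)
    show "c < rowlen la (i - 1)" using part_mono[OF part, of "i - 1" i] cl by simp
  next
    fix c' assume "c' \<le> c"
    then have "U1 (i - 1, c') \<le> U1 (i - 1, c)"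
      using ssyt_row[OF U1, of c' c "i - 1"] part_mono[OF part, of "i - 1" i] cl by simp
    also have "\<dots> < U1 (i, c)" using ssyt_col[OF U1, of c "i - 1"] part cl that by simp
    finally show "(U1((i, c) := y1)) (i - 1, c') < U1 (i, c)" using that by auto
  next
    fix c' assume h: "c \<le> c' \<and> c' < rowlen la i"
    show "U1 (i, c) < (U1((i, c) := y1)) (i, c')"
    proof (cases "c' = c")
      case True then show ?thesis using cy by simp
    next
      case False then show ?thesis using gr[of c'] h cy by simp
    qed
  qed
  have "bcol la (U1((i, c) := y1)) i (U1 (i, c)) = c"
  proof (rule bcol_eqI2[OF cl])
    show "U1 (i, c) < (U1((i, c) := y1)) (i, c)" using cy by simp
    fix c' assume "c' < c"
    then show "(U1((i, c) := y1)) (i, c') \<le> U1 (i, c)" using ssyt_row[OF U1, of c' c i] cl by simp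
  qed
  then show ?thesis using S xN il ex cl unfolding INV_def by auto
qed

lemma rev_base:
  assumes part: "is_partition la" and ad: "addable la r" and U: "U \<in> ssyt N (addbox la r)"
  shows "INV N la (U((r, rowlen la r) := 0)) r (U (r, rowlen la r)) \<and>
    ins la (U((r, rowlen la r) := 0)) r (U (r, rowlen la r)) = (U, r)"
proof -
  have rl: "r \<le> length la" using ad by (simp add: addable_def)
  note rw = rowlen_addbox[OF rl]
  have U': "(\<forall>i j. rowlen (addbox la r) i \<le> j \<longrightarrow> U (i, j) = 0) \<and>
   (\<forall>i j. j < rowlen (addbox la r) i \<longrightarrow> U (i, j) < N) \<and>
   (\<forall>i j. Suc j < rowlen (addbox la r) i \<longrightarrow> U (i, j) \<le> U (i, Suc j)) \<and>
   (\<forall>i j. j < rowlen (addbox la r) i \<and> j < rowlen (addbox la r) (Suc i) \<longrightarrow> U (i, j) < U (Suc i, j))"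
    using U by (simp add: ssyt_iff)
  let ?c = "rowlen la r"
  have S: "U((r, ?c) := 0) \<in> ssyt N la"
    unfolding ssyt_iff
  proof (intro conjI allI impI)
    fix i j assume "rowlen la i \<le> j"
    then show "(U((r, ?c) := 0)) (i, j) = 0" using U' by (cases "i = r") (auto simp: rw)
  next
    fix i j assume "j < rowlen la i"
    then show "(U((r, ?c) := 0)) (i, j) < N" using U' by (cases "i = r") (auto simp: rw)
  next
    fix i j assume "Suc j < rowlen la i"
    then show "(U((r, ?c) := 0)) (i, j) \<le> (U((r, ?c) := 0)) (i, Suc j)" using U'
      by (cases "i = r") (auto simp: rw)
  next
    fix i j assume "j < rowlen la i \<and> j < rowlen la (Suc i)"
    then show "(U((r, ?c) := 0)) (i, j) < (U((r, ?c) := 0)) (Suc i, j)" using U'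
      by (cases "i = r"; cases "Suc i = r") (auto simp: rw)
  qed
  have yN: "U (r, ?c) < N" using U' by (auto simp: rw)
  have rowle: "U (r, c) \<le> U (r, ?c)" if "c < ?c" for c
    using ssyt_row[OF U, of c ?c r] that by (simp add: rw)
  have ex: "\<exists>j. j < rowlen la (r - 1) \<and> (\<forall>c\<le>j. (U((r, ?c) := 0)) (r - 1, c) < U (r, ?c)) \<and>
        (\<forall>c. j \<le> c \<and> c < rowlen la r \<longrightarrow> U (r, ?c) < (U((r, ?c) := 0)) (r, c))" if "0 < r"
  proof (intro exI[of _ ?c] conjI allI impI)
    show "?c < rowlen la (r - 1)" using ad that by (simp add: addable_def)
  next
    fix c assume "c \<le> ?c"
    then have "U (r - 1, c) \<le> U (r - 1, ?c)"
      using ssyt_row[OF U, of c ?c "r - 1"] ad that by (auto simp: rw addable_def)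
    also have "\<dots> < U (r, ?c)" using U' that ad
      by (metis Suc_diff_1 addable_def lessI less_irrefl rw)
    finally show "(U((r, ?c) := 0)) (r - 1, c) < U (r, ?c)" using that by simp
  qed auto
  have I: "INV N la (U((r, ?c) := 0)) r (U (r, ?c))"
    using S yN rl ex unfolding INV_def by auto
  have "bcol la (U((r, ?c) := 0)) r (U (r, ?c)) = ?c"
    by (rule bcol_eqI) (use rowle in auto)
  then have "ins la (U((r, ?c) := 0)) r (U (r, ?c)) = ((U((r, ?c) := 0))((r, ?c) := U (r, ?c)), r)"
    by (rule ins_stop)
  then show ?thesis using I by simp
qed


lemma rins_surj:
  "rins la V i r z = (T, x) \<Longrightarrow> is_partition la \<Longrightarrow> addable la r \<Longrightarrow> U \<in> ssyt N (addbox la r) \<Longrightarrow>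
   V = U((r, rowlen la r) := 0) \<Longrightarrow> z = U (r, rowlen la r) \<Longrightarrow> i \<le> r \<Longrightarrow>
   INV N la T i x \<and> ins la T i x = (U, r)"
proof (induction la V i r z arbitrary: T x rule: rins.induct)
  case (1 la V i r z)
  show ?case
  proof (cases "i < r")
    case True
    obtain U1 y1 where e1: "rins la V (Suc i) r z = (U1, y1)" by (metis surj_pair)
    have IH: "INV N la U1 (Suc i) y1 \<and> ins la U1 (Suc i) y1 = (U, r)"
      using 1(1)[OF True e1 1(3-7)] True by simp
    define c where "c = rcol la U1 i y1"
    have e: "T = U1((i, c) := y1)" "x = U1 (i, c)" using rins_lt[OF True e1] 1(2) c_def by auto
    have rs: "c < rowlen la i \<and> INV N la (U1((i, c) := y1)) i (U1 (i, c)) \<and>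
       bcol la (U1((i, c) := y1)) i (U1 (i, c)) = c"
      using rev_step[OF 1(3) _ c_def] IH by blast
    have "ins la T i x = ins la (T((i, c) := x)) (Suc i) (T (i, c))"
      using ins_bump[of la T i x] rs e by simp
    also have "\<dots> = ins la U1 (Suc i) y1" using e by simp
    finally show ?thesis using IH rs e by (simp add: fun_upd_def)
  next
    case False
    then have "i = r" "T = V" "x = z" using 1(2,8) rins_ge[OF False] by auto
    then show ?thesis using rev_base[OF 1(3,4,5)] 1(6,7) by (simp add: fun_upd_def)
  qed
qed

lemma rins_inj:
  "is_partition la \<Longrightarrow> INV N la T i x \<Longrightarrow> ins la T i x = (U, r) \<Longrightarrow>
   rins la (U((r, rowlen la r) := 0)) i r (U (r, rowlen la r)) = (T, x)"
proof (induction la T i x arbitrary: U r rule: ins.induct)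
  case (1 la T i x)
  note part = 1(2) and I = 1(3)
  have T: "T \<in> ssyt N la" using I by (auto simp: INV_def)
  show ?case
  proof (cases "bcol la T i x < rowlen la i")
    case True
    define c where "c = bcol la T i x"
    have cl: "c < rowlen la i" using True c_def by simp
    have I1: "INV N la (T((i, c) := x)) (Suc i) (T (i, c))"
      using ins_step_INV[OF part I c_def cl] .
    have e: "ins la (T((i, c) := x)) (Suc i) (T (i, c)) = (U, r)"
      using 1(4) ins_bump[OF True] c_def by simp
    have IH: "rins la (U((r, rowlen la r) := 0)) (Suc i) r (U (r, rowlen la r)) = (T((i, c) := x), T (i, c))"
      by (rule 1(1)[OF c_def cl part I1 e])
    have ir: "i < r" using ins_ge[OF e] by simp
    have xc: "x < T (i, c)" and bef: "\<And>c'. c' < c \<Longrightarrow> T (i, c') \<le> x"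
      using bcol_lt[of la T i x] cl c_def by auto
    have rc: "rcol la (T((i, c) := x)) i (T (i, c)) = c"
    proof (rule rcol_eqI[OF cl])
      show "(T((i, c) := x)) (i, c) < T (i, c)" using xc by simp
      fix c' assume "c < c'" "c' < rowlen la i"
      then show "T (i, c) \<le> (T((i, c) := x)) (i, c')" using ssyt_row[OF T, of c c' i] by simp
    qed
    have R: "rins la (U((r, rowlen la r) := 0)) i r (U (r, rowlen la r)) = (T, x)"
      using rins_lt[OF ir IH] rc by simp
    show ?thesis using R by (simp add: fun_upd_def)
  next
    case False
    then have ce: "bcol la T i x = rowlen la i" using bcol_le[of la T i x] by simp
    have e: "U = T((i, rowlen la i) := x)" "r = i" using 1(4) ins_stop[OF ce] by auto
    have "T (i, rowlen la i) = 0" using ssyt_zero[OF T] by simp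
    then show ?thesis using e rins_ge[of i i] by (auto simp: fun_upd_def)
  qed
qed


lemma INV0: "INV N la T 0 x \<longleftrightarrow> T \<in> ssyt N la \<and> x < N"
  by (simp add: INV_def)

definition insr :: "nat list \<Rightarrow> (nat \<times> nat \<Rightarrow> nat) \<Rightarrow> nat \<Rightarrow> nat \<times> (nat \<times> nat \<Rightarrow> nat)" where
  "insr la T x = (case ins la T 0 x of (U, r) \<Rightarrow> (r, U))"

lemma ins_bij:
  assumes part: "is_partition la"
  shows "bij_betw (\<lambda>(T, x). insr la T x) (ssyt N la \<times> {..<N})
           (SIGMA r:{r. addable la r}. ssyt N (addbox la r))"
  unfolding bij_betw_def
proof (intro conjI)
  show "inj_on (\<lambda>(T, x). insr la T x) (ssyt N la \<times> {..<N})"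
  proof (rule inj_onI, clarify)
    fix T x T' x' assume h: "T \<in> ssyt N la" "x < N" "T' \<in> ssyt N la" "x' < N"
      and eq: "insr la T x = insr la T' x'"
    obtain U r where e: "ins la T 0 x = (U, r)" by (metis surj_pair)
    obtain U' r' where e': "ins la T' 0 x' = (U', r')" by (metis surj_pair)
    have "U' = U" "r' = r" using eq e e' by (auto simp: insr_def)
    then show "T = T' \<and> x = x'"
      using rins_inj[OF part _ e] rins_inj[OF part _ e'] h by (simp add: INV0)
  qed
next
  show "(\<lambda>(T, x). insr la T x) ` (ssyt N la \<times> {..<N}) = (SIGMA r:{r. addable la r}. ssyt N (addbox la r))"
  proof (intro equalityI subsetI)
    fix p assume "p \<in> (\<lambda>(T, x). insr la T x) ` (ssyt N la \<times> {..<N})"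
    then obtain T x where h: "T \<in> ssyt N la" "x < N" "p = insr la T x" by auto
    obtain U r where e: "ins la T 0 x = (U, r)" by (metis surj_pair)
    show "p \<in> (SIGMA r:{r. addable la r}. ssyt N (addbox la r))"
      using ins_correct[OF part _ e] h e by (simp add: INV0 insr_def)
  next
    fix p assume "p \<in> (SIGMA r:{r. addable la r}. ssyt N (addbox la r))"
    then obtain r U where h: "p = (r, U)" "addable la r" "U \<in> ssyt N (addbox la r)" by auto
    obtain T x where e: "rins la (U((r, rowlen la r) := 0)) 0 r (U (r, rowlen la r)) = (T, x)"
      by (metis surj_pair)
    have "INV N la T 0 x \<and> ins la T 0 x = (U, r)"
      by (rule rins_surj[OF e part h(2,3) refl refl]) simp
    then show "p \<in> (\<lambda>(T, x). insr la T x) ` (ssyt N la \<times> {..<N})"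
      using h by (auto simp: INV0 insr_def intro!: image_eqI[of _ _ "(T, x)"])
  qed
qed

lemma bump_le:
  "is_partition la \<Longrightarrow> INV N la T i x \<Longrightarrow> ins la T i x = (U, r) \<Longrightarrow>
   (\<forall>j c. i \<le> j \<longrightarrow> S (j, c) = U (j, c)) \<Longrightarrow> x \<le> z \<Longrightarrow>
   ins (addbox la r) S i z = (S', r') \<Longrightarrow> r' \<le> r"
proof (induction la T i x arbitrary: U r S z S' r' rule: ins.induct)
  case (1 la T i x)
  note part = 1(2) and I = 1(3)
  have T: "T \<in> ssyt N la" and il: "i \<le> length la" using I by (auto simp: INV_def)
  have rl: "r \<le> length la" using ins_correct[OF part I 1(4)] by (simp add: addable_def)
  show ?case
  proof (cases "bcol la T i x < rowlen la i")
    case True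
    define c where "c = bcol la T i x"
    have cl: "c < rowlen la i" using True c_def by simp
    have I1: "INV N la (T((i, c) := x)) (Suc i) (T (i, c))"
      using ins_step_INV[OF part I c_def cl] .
    have e: "ins la (T((i, c) := x)) (Suc i) (T (i, c)) = (U, r)"
      using 1(4) ins_bump[OF True] c_def by simp
    have ir: "Suc i \<le> r" using ins_ge[OF e] .
    have xc: "x < T (i, c)" and bef: "\<And>c'. c' < c \<Longrightarrow> T (i, c') \<le> x"
      using bcol_lt[of la T i x] cl c_def by auto
    have Si: "S (i, c') = (T((i, c) := x)) (i, c')" for c'
      using 1(5) ins_keep[OF e, of i c'] by simp
    have rw: "rowlen (addbox la r) i = rowlen la i" using rowlen_addbox[OF rl] ir by simp
    define c2 where "c2 = bcol (addbox la r) S i z"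
    show ?thesis
    proof (cases "c2 < rowlen (addbox la r) i")
      case False
      then have "c2 = rowlen (addbox la r) i" using bcol_le[of "addbox la r" S i z] c2_def by simp
      then have "r' = i" using ins_stop[of "addbox la r" S i z] 1(7) c2_def by simp
      then show ?thesis using ir by simp
    next
      case c2l: True
      have zc2: "z < S (i, c2)" using bcol_lt(1)[of "addbox la r" S i z] c2l c2_def by simp
      have cc2: "c < c2"
      proof (rule ccontr)
        assume "\<not> c < c2"
        then have "S (i, c2) \<le> x" using Si bef by (cases "c2 = c") auto
        then show False using zc2 1(6) by simp
      qed
      have z2: "T (i, c) \<le> S (i, c2)"
        using Si[of c2] cc2 ssyt_row[OF T, of c c2 i] c2l rw by simp
      have e2: "ins (addbox la r) (S((i, c2) := z)) (Suc i) (S (i, c2)) = (S', r')"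
        using 1(7) ins_bump[of "addbox la r" S i z] c2l c2_def by simp
      show ?thesis
        by (rule 1(1)[OF c_def cl part I1 e _ z2 e2]) (use 1(5) in auto)
    qed
  next
    case False
    then have ce: "bcol la T i x = rowlen la i" using bcol_le[of la T i x] by simp
    have e: "U = T((i, rowlen la i) := x)" "r = i" using 1(4) ins_stop[OF ce] by auto
    have le: "\<And>c. c < rowlen la i \<Longrightarrow> T (i, c) \<le> x" using bcol_eq[OF ce] .
    have "bcol (addbox la r) S i z = rowlen (addbox la r) i"
    proof (rule bcol_eqI)
      fix c assume "c < rowlen (addbox la r) i"
      then have "c \<le> rowlen la i" using rowlen_addbox[OF il] e by simp
      then have "S (i, c) \<le> x" using 1(5) e le by (cases "c = rowlen la i") auto
      then show "S (i, c) \<le> z" using 1(6) by simp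
    qed
    then have "r' = i" using ins_stop[of "addbox la r" S i z] 1(7) by simp
    then show ?thesis using e by simp
  qed
qed

lemma bump_gt:
  "is_partition la \<Longrightarrow> INV N la T i x \<Longrightarrow> ins la T i x = (U, r) \<Longrightarrow>
   (\<forall>j c. i \<le> j \<longrightarrow> S (j, c) = U (j, c)) \<Longrightarrow> z < x \<Longrightarrow>
   ins (addbox la r) S i z = (S', r') \<Longrightarrow> r < r'"
proof (induction la T i x arbitrary: U r S z S' r' rule: ins.induct)
  case (1 la T i x)
  note part = 1(2) and I = 1(3)
  have T: "T \<in> ssyt N la" and il: "i \<le> length la" using I by (auto simp: INV_def)
  have rl: "r \<le> length la" using ins_correct[OF part I 1(4)] by (simp add: addable_def)
  show ?case
  proof (cases "bcol la T i x < rowlen la i")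
    case True
    define c where "c = bcol la T i x"
    have cl: "c < rowlen la i" using True c_def by simp
    have I1: "INV N la (T((i, c) := x)) (Suc i) (T (i, c))"
      using ins_step_INV[OF part I c_def cl] .
    have e: "ins la (T((i, c) := x)) (Suc i) (T (i, c)) = (U, r)"
      using 1(4) ins_bump[OF True] c_def by simp
    have ir: "Suc i \<le> r" using ins_ge[OF e] .
    have xc: "x < T (i, c)" and bef: "\<And>c'. c' < c \<Longrightarrow> T (i, c') \<le> x"
      using bcol_lt[of la T i x] cl c_def by auto
    have Si: "S (i, c') = (T((i, c) := x)) (i, c')" for c'
      using 1(5) ins_keep[OF e, of i c'] by simp
    have rw: "rowlen (addbox la r) i = rowlen la i" using rowlen_addbox[OF rl] ir by simp
    define c2 where "c2 = bcol (addbox la r) S i z"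
    have Sc: "z < S (i, c)" using Si[of c] 1(6) by simp
    have c2l: "c2 < rowlen (addbox la r) i"
    proof (rule ccontr)
      assume "\<not> c2 < rowlen (addbox la r) i"
      then have "c2 = rowlen (addbox la r) i" using bcol_le[of "addbox la r" S i z] c2_def by simp
      then have "S (i, c) \<le> z" using bcol_eq[of "addbox la r" S i z c] c2_def cl rw by simp
      then show False using Sc by simp
    qed
    have c2c: "c2 \<le> c"
    proof (rule ccontr)
      assume "\<not> c2 \<le> c"
      then have "S (i, c) \<le> z" using bcol_lt(2)[of "addbox la r" S i z c] c2l c2_def by simp
      then show False using Sc by simp
    qed
    have z2: "S (i, c2) < T (i, c)"
    proof (cases "c2 = c")
      case True then show ?thesis using Si xc by simp
    next
      case False
      then have "S (i, c2) \<le> x" using Si bef c2c by simp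
      then show ?thesis using xc by simp
    qed
    have e2: "ins (addbox la r) (S((i, c2) := z)) (Suc i) (S (i, c2)) = (S', r')"
      using 1(7) ins_bump[of "addbox la r" S i z] c2l c2_def by simp
    show ?thesis
      by (rule 1(1)[OF c_def cl part I1 e _ z2 e2]) (use 1(5) in auto)
  next
    case False
    then have ce: "bcol la T i x = rowlen la i" using bcol_le[of la T i x] by simp
    have e: "U = T((i, rowlen la i) := x)" "r = i" using 1(4) ins_stop[OF ce] by auto
    have rw: "rowlen (addbox la r) i = Suc (rowlen la i)" using rowlen_addbox[OF il] e by simp
    have Sc: "z < S (i, rowlen la i)" using 1(5,6) e by simp
    have c2l: "bcol (addbox la r) S i z < rowlen (addbox la r) i"
    proof (rule ccontr)
      assume "\<not> bcol (addbox la r) S i z < rowlen (addbox la r) i"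
      then have "bcol (addbox la r) S i z = rowlen (addbox la r) i"
        using bcol_le[of "addbox la r" S i z] by simp
      then have "S (i, rowlen la i) \<le> z" using bcol_eq[of "addbox la r" S i z "rowlen la i"] rw by simp
      then show False using Sc by simp
    qed
    have "Suc i \<le> r'" using ins_ge 1(7) ins_bump[OF c2l] by metis
    then show ?thesis using e by simp
  qed
qed



lemma finite_ssyt: "finite (ssyt N la)"
proof (rule finite_subset[OF _ finite_set_of_finite_funs[OF finite_cells[of la] finite_lessThan[of N]]])
  show "ssyt N la \<subseteq> {f. \<forall>x. (x \<in> cells la \<longrightarrow> f x \<in> {..<N}) \<and> (x \<notin> cells la \<longrightarrow> f x = 0)}"
    unfolding ssyt_def by auto
qed

lemma mono_mult: "mono a * mono b = mono (a + b)"
  by (simp add: mono_def mult_single)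

lemma if_mult_zero: "(if P then m else 0) * (c::'a::semiring_0) = (if P then m * c else 0)"
  by simp

definition XP :: "nat \<Rightarrow> (nat \<Rightarrow> nat \<Rightarrow> bool) \<Rightarrow> spoly" where
  "XP N P = (\<Sum>a<N. \<Sum>b<N. if P a b then mono (Poly_Mapping.single a 1 + Poly_Mapping.single b 1) else 0)"

lemma schur_expand1:
  "XP N P * schur N la = (\<Sum>p\<in>ssyt N la \<times> {..<N}. (\<lambda>(T, a). \<Sum>b<N. if P a b then
      mono (content la T + Poly_Mapping.single a 1 + Poly_Mapping.single b 1) else 0) p)"
proof -
  have "XP N P * schur N la = (\<Sum>T\<in>ssyt N la. \<Sum>a<N. \<Sum>b<N. if P a b then
      mono (content la T + Poly_Mapping.single a 1 + Poly_Mapping.single b 1) else 0)"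
  proof -
    have "XP N P * schur N la = (\<Sum>T\<in>ssyt N la. XP N P * mono (content la T))"
      by (simp add: schur_def sum_distrib_left)
    also have "\<dots> = (\<Sum>T\<in>ssyt N la. \<Sum>a<N. \<Sum>b<N. if P a b then
      mono (content la T + Poly_Mapping.single a 1 + Poly_Mapping.single b 1) else 0)"
    proof (intro sum.cong refl)
      fix T assume "T \<in> ssyt N la"
      have "XP N P * mono (content la T) = (\<Sum>a<N. \<Sum>b<N. (if P a b then mono (Poly_Mapping.single a 1 + Poly_Mapping.single b 1) else 0) * mono (content la T))"
        by (simp add: XP_def sum_distrib_right)
      also have "\<dots> = (\<Sum>a<N. \<Sum>b<N. if P a b then
        mono (content la T + Poly_Mapping.single a 1 + Poly_Mapping.single b 1) else 0)"
        by (intro sum.cong refl) (simp add: mono_mult add_ac)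
      finally show "XP N P * mono (content la T) = (\<Sum>a<N. \<Sum>b<N. if P a b then
        mono (content la T + Poly_Mapping.single a 1 + Poly_Mapping.single b 1) else 0)" .
    qed
    finally show ?thesis .
  qed
  also have "\<dots> = (\<Sum>p\<in>ssyt N la \<times> {..<N}. (\<lambda>(T, a). \<Sum>b<N. if P a b then
      mono (content la T + Poly_Mapping.single a 1 + Poly_Mapping.single b 1) else 0) p)"
    by (rule sum.cartesian_product)
  finally show ?thesis .
qed


lemma sum_ins:
  assumes part: "is_partition la"
    and eq: "\<And>T a. T \<in> ssyt N la \<Longrightarrow> a < N \<Longrightarrow> F (T, a) = G (insr la T a)"
  shows "(\<Sum>p\<in>ssyt N la \<times> {..<N}. F p) = (\<Sum>r\<in>{r. addable la r}. \<Sum>U\<in>ssyt N (addbox la r). G (r, U))"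
proof -
  have "(\<Sum>p\<in>ssyt N la \<times> {..<N}. F p) = (\<Sum>p\<in>ssyt N la \<times> {..<N}. G ((\<lambda>(T, x). insr la T x) p))"
    by (intro sum.cong refl) (auto simp: eq)
  also have "\<dots> = (\<Sum>q\<in>(SIGMA r:{r. addable la r}. ssyt N (addbox la r)). G q)"
    by (rule sum.reindex_bij_betw[OF ins_bij[OF part]])
  also have "\<dots> = (\<Sum>r\<in>{r. addable la r}. \<Sum>U\<in>ssyt N (addbox la r). G (r, U))"
    using sum.Sigma[of "{r. addable la r}" "\<lambda>r. ssyt N (addbox la r)" "\<lambda>r U. G (r, U)"]
      finite_addable finite_ssyt by simp
  finally show ?thesis .
qed

lemma insr_props:
  assumes part: "is_partition la" and T: "T \<in> ssyt N la" and a: "a < N"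
  shows "addable la (fst (insr la T a))"
    "snd (insr la T a) \<in> ssyt N (addbox la (fst (insr la T a)))"
    "content (addbox la (fst (insr la T a))) (snd (insr la T a)) = content la T + Poly_Mapping.single a 1"
proof -
  obtain U r where e: "ins la T 0 a = (U, r)" by (metis surj_pair)
  have "INV N la T 0 a" using T a by (simp add: INV0)
  from ins_correct[OF part this e] e show
    "addable la (fst (insr la T a))"
    "snd (insr la T a) \<in> ssyt N (addbox la (fst (insr la T a)))"
    "content (addbox la (fst (insr la T a))) (snd (insr la T a)) = content la T + Poly_Mapping.single a 1"
    by (auto simp: insr_def)
qed

lemma pieri_gen:
  assumes part: "is_partition la"
    and PQ: "\<And>T a b. T \<in> ssyt N la \<Longrightarrow> a < N \<Longrightarrow> b < N \<Longrightarrow>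
       P a b = Q (fst (insr la T a)) (fst (insr (addbox la (fst (insr la T a))) (snd (insr la T a)) b))"
  shows "XP N P * schur N la = (\<Sum>r\<in>{r. addable la r}. \<Sum>r'\<in>{r'. addable (addbox la r) r'}.
            if Q r r' then schur N (addbox (addbox la r) r') else 0)"
proof -
  define G where "G = (\<lambda>(r, T1). \<Sum>b<N. if Q r (fst (insr (addbox la r) T1 b)) then
      mono (content (addbox la r) T1 + Poly_Mapping.single b 1) else 0)"
  have "XP N P * schur N la = (\<Sum>r\<in>{r. addable la r}. \<Sum>U\<in>ssyt N (addbox la r). G (r, U))"
    unfolding schur_expand1
  proof (rule sum_ins[OF part])
    fix T a assume T: "T \<in> ssyt N la" and a: "a < N"
    note ip = insr_props[OF part T a]
    show "(\<lambda>(T, a). \<Sum>b<N. if P a b then mono (content la T + Poly_Mapping.single a 1 + Poly_Mapping.single b 1) else 0) (T, a)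
       = G (insr la T a)"
      unfolding G_def using PQ[OF T a] ip(3)
      by (cases "insr la T a") (auto intro!: sum.cong)
  qed
  also have "\<dots> = (\<Sum>r\<in>{r. addable la r}. \<Sum>r'\<in>{r'. addable (addbox la r) r'}.
            if Q r r' then schur N (addbox (addbox la r) r') else 0)"
  proof (intro sum.cong refl)
    fix r assume r: "r \<in> {r. addable la r}"
    let ?mu = "addbox la r"
    have pm: "is_partition ?mu" using addbox_part[OF part] r by simp
    define H where "H = (\<lambda>(r', U). if Q r r' then mono (content (addbox ?mu r') U) else 0)"
    have "(\<Sum>U\<in>ssyt N ?mu. G (r, U)) = (\<Sum>p\<in>ssyt N ?mu \<times> {..<N}. (\<lambda>(T1, b). if Q r (fst (insr ?mu T1 b)) then
      mono (content ?mu T1 + Poly_Mapping.single b 1) else 0) p)"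
      unfolding G_def by (simp add: sum.cartesian_product)
    also have "\<dots> = (\<Sum>r'\<in>{r'. addable ?mu r'}. \<Sum>U\<in>ssyt N (addbox ?mu r'). H (r', U))"
    proof (rule sum_ins[OF pm])
      fix T1 b assume T1: "T1 \<in> ssyt N ?mu" and b: "b < N"
      note ip = insr_props[OF pm T1 b]
      show "(\<lambda>(T1, b). if Q r (fst (insr ?mu T1 b)) then mono (content ?mu T1 + Poly_Mapping.single b 1) else 0) (T1, b)
        = H (insr ?mu T1 b)"
        unfolding H_def using ip(3) by (cases "insr ?mu T1 b") auto
    qed
    also have "\<dots> = (\<Sum>r'\<in>{r'. addable ?mu r'}. if Q r r' then schur N (addbox ?mu r') else 0)"
      unfolding H_def schur_def by (intro sum.cong refl) auto
    finally show "(\<Sum>U\<in>ssyt N (addbox la r). G (r, U)) = (\<Sum>r'\<in>{r'. addable (addbox la r) r'}.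
            if Q r r' then schur N (addbox (addbox la r) r') else 0)" .
  qed
  finally show ?thesis .
qed


lemma PQ_le:
  assumes part: "is_partition la" and T: "T \<in> ssyt N la" and a: "a < N" and b: "b < N"
  shows "(a \<le> b) = (fst (insr (addbox la (fst (insr la T a))) (snd (insr la T a)) b) \<le> fst (insr la T a))"
    and "(b < a) = (fst (insr la T a) < fst (insr (addbox la (fst (insr la T a))) (snd (insr la T a)) b))"
proof -
  obtain T1 r where e: "ins la T 0 a = (T1, r)" by (metis surj_pair)
  obtain U r' where e2: "ins (addbox la r) T1 0 b = (U, r')" by (metis surj_pair)
  have I: "INV N la T 0 a" using T a by (simp add: INV0)
  have i1: "insr la T a = (r, T1)" using e by (simp add: insr_def)
  have i2: "insr (addbox la r) T1 b = (r', U)" using e2 by (simp add: insr_def)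
  have le: "a \<le> b \<Longrightarrow> r' \<le> r" using bump_le[OF part I e _ _ e2] by simp
  have gt: "b < a \<Longrightarrow> r < r'" using bump_gt[OF part I e _ _ e2] by simp
  show "(a \<le> b) = (fst (insr (addbox la (fst (insr la T a))) (snd (insr la T a)) b) \<le> fst (insr la T a))"
    using le gt i1 i2 by (auto simp: not_le[symmetric])
  show "(b < a) = (fst (insr la T a) < fst (insr (addbox la (fst (insr la T a))) (snd (insr la T a)) b))"
    using le gt i1 i2 by (auto simp: not_le[symmetric])
qed

definition hh :: "nat \<Rightarrow> spoly" where "hh N = XP N (\<lambda>a b. a \<le> b)"
definition ee :: "nat \<Rightarrow> spoly" where "ee N = XP N (\<lambda>a b. b < a)"

lemma hh_schur: "is_partition la \<Longrightarrow> hh N * schur N la = (\<Sum>r\<in>{r. addable la r}. \<Sum>r'\<in>{r'. addable (addbox la r) r'}.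
            if r' \<le> r then schur N (addbox (addbox la r) r') else 0)"
  unfolding hh_def by (rule pieri_gen) (assumption, rule PQ_le(1))

lemma ee_schur: "is_partition la \<Longrightarrow> ee N * schur N la = (\<Sum>r\<in>{r. addable la r}. \<Sum>r'\<in>{r'. addable (addbox la r) r'}.
            if r < r' then schur N (addbox (addbox la r) r') else 0)"
  unfolding ee_def by (rule pieri_gen) (assumption, rule PQ_le(2))

lemma SP0: "schur_positive N 0"
  unfolding schur_positive_def by (rule exI[of _ "{}"]) simp

lemma SP_schur: "is_partition la \<Longrightarrow> schur_positive N (schur N la)"
  unfolding schur_positive_def by (intro exI[of _ "{la}"] exI[of _ "\<lambda>_. 1"]) simp

lemma SP_add: assumes "schur_positive N f" "schur_positive N g" shows "schur_positive N (f + g)"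
proof -
  obtain S1 c1 where 1: "finite S1" "\<forall>la\<in>S1. is_partition la" "f = (\<Sum>la\<in>S1. of_nat (c1 la) * schur N la)"
    using assms(1) unfolding schur_positive_def by blast
  obtain S2 c2 where 2: "finite S2" "\<forall>la\<in>S2. is_partition la" "g = (\<Sum>la\<in>S2. of_nat (c2 la) * schur N la)"
    using assms(2) unfolding schur_positive_def by blast
  define c where "c la = (if la \<in> S1 then c1 la else 0) + (if la \<in> S2 then c2 la else 0)" for la
  have "(\<Sum>la\<in>S1 \<union> S2. of_nat (c la) * schur N la) =
     (\<Sum>la\<in>S1 \<union> S2. if la \<in> S1 then of_nat (c1 la) * schur N la else 0) +
     (\<Sum>la\<in>S1 \<union> S2. if la \<in> S2 then of_nat (c2 la) * schur N la else 0)"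
    unfolding c_def by (simp add: sum.distrib[symmetric] distrib_right) (intro sum.cong refl, auto)
  also have "\<dots> = f + g"
  proof -
    have "(S1 \<union> S2) \<inter> S1 = S1" "(S1 \<union> S2) \<inter> S2 = S2" by auto
    then show ?thesis using 1 2 sum.inter_restrict[of "S1 \<union> S2" "\<lambda>la. of_nat (c1 la) * schur N la" S1]
      sum.inter_restrict[of "S1 \<union> S2" "\<lambda>la. of_nat (c2 la) * schur N la" S2] by simp
  qed
  finally show ?thesis unfolding schur_positive_def using 1 2
    by (intro exI[of _ "S1 \<union> S2"] exI[of _ c]) auto
qed

lemma SP_sum: "finite I \<Longrightarrow> (\<And>i. i \<in> I \<Longrightarrow> schur_positive N (g i)) \<Longrightarrow> schur_positive N (\<Sum>i\<in>I. g i)"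
  by (induction I rule: finite_induct) (auto simp: SP0 SP_add)

lemma SP_if: "(b \<Longrightarrow> schur_positive N f) \<Longrightarrow> schur_positive N (if b then f else 0)"
  by (auto simp: SP0)

lemma SP_nat: "schur_positive N f \<Longrightarrow> schur_positive N (of_nat n * f)"
  by (induction n) (auto simp: SP0 SP_add distrib_right)

lemma SP_hh: assumes "schur_positive N f" shows "schur_positive N (hh N * f)"
proof -
  obtain S c where 1: "finite S" "\<forall>la\<in>S. is_partition la" "f = (\<Sum>la\<in>S. of_nat (c la) * schur N la)"
    using assms unfolding schur_positive_def by blast
  have "hh N * f = (\<Sum>la\<in>S. of_nat (c la) * (hh N * schur N la))"
    unfolding 1(3) sum_distrib_left by (simp add: mult_ac)
  moreover have "schur_positive N (\<Sum>la\<in>S. of_nat (c la) * (hh N * schur N la))"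
  proof (intro SP_sum[OF 1(1)] SP_nat)
    fix la assume "la \<in> S"
    then have p: "is_partition la" using 1 by auto
    show "schur_positive N (hh N * schur N la)" unfolding hh_schur[OF p]
    proof (intro SP_sum SP_if)
      fix r r' assume "r \<in> {r. addable la r}" "r' \<in> {r'. addable (addbox la r) r'}"
      then show "schur_positive N (schur N (addbox (addbox la r) r'))"
        using p by (auto intro!: SP_schur addbox_part)
    qed (auto simp: finite_addable)
  qed
  ultimately show ?thesis by simp
qed

lemma SP_ee: assumes "schur_positive N f" shows "schur_positive N (ee N * f)"
proof -
  obtain S c where 1: "finite S" "\<forall>la\<in>S. is_partition la" "f = (\<Sum>la\<in>S. of_nat (c la) * schur N la)"
    using assms unfolding schur_positive_def by blast
  have "ee N * f = (\<Sum>la\<in>S. of_nat (c la) * (ee N * schur N la))"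
    unfolding 1(3) sum_distrib_left by (simp add: mult_ac)
  moreover have "schur_positive N (\<Sum>la\<in>S. of_nat (c la) * (ee N * schur N la))"
  proof (intro SP_sum[OF 1(1)] SP_nat)
    fix la assume "la \<in> S"
    then have p: "is_partition la" using 1 by auto
    show "schur_positive N (ee N * schur N la)" unfolding ee_schur[OF p]
    proof (intro SP_sum SP_if)
      fix r r' assume "r \<in> {r. addable la r}" "r' \<in> {r'. addable (addbox la r) r'}"
      then show "schur_positive N (schur N (addbox (addbox la r) r'))"
        using p by (auto intro!: SP_schur addbox_part)
    qed (auto simp: finite_addable)
  qed
  ultimately show ?thesis by simp
qed

lemma schur_nil: "schur N [] = 1"
proof -
  have "ssyt N [] = {\<lambda>_. 0}" by (auto simp: ssyt_def cells_def)
  then show ?thesis by (simp add: schur_def content_def cells_def mono_def)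
qed

lemma SP_one: "schur_positive N 1"
  using SP_schur[of "[]" N] by (simp add: schur_nil is_partition_def)



definition GG :: "'a::comm_ring_1 \<Rightarrow> 'a \<Rightarrow> nat \<Rightarrow> 'a" where
  "GG x y n = (\<Sum>i\<le>n. y ^ i * x ^ (n - i))"

definition QQ :: "'a::comm_ring_1 \<Rightarrow> 'a \<Rightarrow> nat \<Rightarrow> 'a" where
  "QQ h e n = (\<Sum>i\<le>n. if even i then of_nat (n choose i) * (e ^ i * h ^ (n - i)) else 0)"

lemma GG_Suc1: "GG x y (Suc n) = x * GG x y n + y ^ Suc n"
proof -
  have "GG x y (Suc n) = (\<Sum>i\<le>n. y ^ i * x ^ (Suc n - i)) + y ^ Suc n"
    by (simp add: GG_def)
  also have "(\<Sum>i\<le>n. y ^ i * x ^ (Suc n - i)) = x * GG x y n"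
    unfolding GG_def sum_distrib_left by (intro sum.cong refl) (simp add: Suc_diff_le mult_ac)
  finally show ?thesis .
qed

lemma GG_Suc2: "GG x y (Suc n) = x ^ Suc n + y * GG x y n"
proof -
  have "GG x y (Suc n) = x ^ Suc n + (\<Sum>i\<le>n. y ^ Suc i * x ^ (Suc n - Suc i))"
    unfolding GG_def by (subst sum.atMost_Suc_shift) simp
  also have "(\<Sum>i\<le>n. y ^ Suc i * x ^ (Suc n - Suc i)) = y * GG x y n"
    unfolding GG_def sum_distrib_left by (intro sum.cong refl) (simp add: mult_ac)
  finally show ?thesis .
qed

lemma QQ_double: "QQ h e n + QQ h e n = (h + e) ^ n + (h - e) ^ n"
proof -
  have "(h + e) ^ n = (e + h) ^ n" by (simp only: add.commute)
  also have "\<dots> = (\<Sum>k\<le>n. of_nat (n choose k) * e ^ k * h ^ (n - k))"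
    by (rule binomial_ring)
  finally have 1: "(h + e) ^ n = (\<Sum>k\<le>n. of_nat (n choose k) * e ^ k * h ^ (n - k))" .
  have "(h - e) ^ n = (- e + h) ^ n" by (simp only: diff_conv_add_uminus add.commute)
  also have "\<dots> = (\<Sum>k\<le>n. of_nat (n choose k) * (- e) ^ k * h ^ (n - k))"
    by (rule binomial_ring)
  finally have 2: "(h - e) ^ n = (\<Sum>k\<le>n. of_nat (n choose k) * (- e) ^ k * h ^ (n - k))" .
  from 1 2 have "(h + e) ^ n + (h - e) ^ n =
     (\<Sum>k\<le>n. of_nat (n choose k) * e ^ k * h ^ (n - k) + of_nat (n choose k) * (- e) ^ k * h ^ (n - k))"
    by (simp only: sum.distrib)
  also have "\<dots> = (\<Sum>k\<le>n. (if even k then of_nat (n choose k) * (e ^ k * h ^ (n - k)) else 0) +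
      (if even k then of_nat (n choose k) * (e ^ k * h ^ (n - k)) else 0))"
  proof (intro sum.cong refl)
    fix k
    show "of_nat (n choose k) * e ^ k * h ^ (n - k) + of_nat (n choose k) * (- e) ^ k * h ^ (n - k) =
      (if even k then of_nat (n choose k) * (e ^ k * h ^ (n - k)) else 0) +
      (if even k then of_nat (n choose k) * (e ^ k * h ^ (n - k)) else 0)"
    proof (cases "even k")
      case True
      then have "(- e) ^ k = e ^ k" by (subst power_minus) simp
      then show ?thesis using True by (simp add: mult_ac)
    next
      case False
      then have "(- e) ^ k = - (e ^ k)" by (subst power_minus) simp
      then show ?thesis using False by simp
    qed
  qed
  finally have F: "(h + e) ^ n + (h - e) ^ n = (\<Sum>k\<le>n. (if even k then of_nat (n choose k) * (e ^ k * h ^ (n - k)) else 0) +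
      (if even k then of_nat (n choose k) * (e ^ k * h ^ (n - k)) else 0))" .
  show ?thesis unfolding QQ_def sum.distrib[symmetric] by (rule F[symmetric])
qed

lemma abs_step:
  fixes A B x y h p q :: "'a::comm_ring_1"
  assumes "B = x * A + p" "B = q + y * A" "h + h = x + y"
  shows "(B - h * A) + (B - h * A) = q + p"
proof -
  have "(B - h * A) + (B - h * A) = B + B - (h + h) * A" by (simp add: algebra_simps)
  also have "\<dots> = (x * A + p) + (q + y * A) - (x + y) * A" using assms by simp
  also have "\<dots> = q + p" by (simp add: algebra_simps)
  finally show ?thesis .
qed

lemma abs_step2:
  fixes a A B hk h :: "'a::comm_ring_1"
  shows "a - hk * h * B = (a - hk * A) + hk * (A - h * B)"
  by (simp add: algebra_simps)

lemma GG_step: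
  fixes h e :: "'a::comm_ring_1"
  assumes two: "\<And>u v::'a. u + u = v + v \<Longrightarrow> u = v"
  shows "GG (h + e) (h - e) (Suc n) - h * GG (h + e) (h - e) n = QQ h e (Suc n)"
proof (rule two)
  let ?x = "h + e" and ?y = "h - e"
  have "(GG ?x ?y (Suc n) - h * GG ?x ?y n) + (GG ?x ?y (Suc n) - h * GG ?x ?y n) =
     ?x ^ Suc n + ?y ^ Suc n"
    by (rule abs_step[OF GG_Suc1 GG_Suc2]) simp
  also have "\<dots> = QQ h e (Suc n) + QQ h e (Suc n)" by (simp add: QQ_double)
  finally show "(GG ?x ?y (Suc n) - h * GG ?x ?y n) + (GG ?x ?y (Suc n) - h * GG ?x ?y n) =
      QQ h e (Suc n) + QQ h e (Suc n)" .
qed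

lemma GG_main:
  fixes h e :: "'a::comm_ring_1"
  assumes two: "\<And>u v::'a. u + u = v + v \<Longrightarrow> u = v"
  shows "k \<le> n \<Longrightarrow> GG (h + e) (h - e) n - h ^ k * GG (h + e) (h - e) (n - k) = (\<Sum>j<k. h ^ j * QQ h e (n - j))"
proof (induction k)
  case 0 then show ?case by simp
next
  case (Suc k)
  let ?G = "GG (h + e) (h - e)"
  have nk: "n - k = Suc (n - Suc k)" using Suc.prems by simp
  have st: "?G (n - k) - h * ?G (n - Suc k) = QQ h e (n - k)"
    using GG_step[OF two, of h e "n - Suc k"] nk by simp
  have "?G n - h ^ Suc k * ?G (n - Suc k) = (?G n - h ^ k * ?G (n - k)) + h ^ k * (?G (n - k) - h * ?G (n - Suc k))"
    unfolding power_Suc2 by (rule abs_step2)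
  also have "\<dots> = (\<Sum>j<k. h ^ j * QQ h e (n - j)) + h ^ k * QQ h e (n - k)"
    using Suc.IH Suc.prems st by simp
  finally show ?case by simp
qed


lemma spoly_two: "(u::spoly) + u = v + v \<Longrightarrow> u = v"
proof (rule poly_mapping_eqI)
  fix k assume "u + u = v + v"
  then have "Poly_Mapping.lookup (u + u) k = Poly_Mapping.lookup (v + v) k" by simp
  then have "Poly_Mapping.lookup u k + Poly_Mapping.lookup u k = Poly_Mapping.lookup v k + Poly_Mapping.lookup v k"
    by (simp only: lookup_add)
  then show "Poly_Mapping.lookup u k = Poly_Mapping.lookup v k" by simp
qed

abbreviation mm :: "nat \<Rightarrow> nat \<Rightarrow> spoly" where
  "mm a b \<equiv> Defs.mono (Poly_Mapping.single a 1 + Poly_Mapping.single b 1)"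

lemma psum1: "psum N 1 = (\<Sum>a<N. Defs.mono (Poly_Mapping.single a 1))"
  by (simp add: psum_def var_pow_def)

lemma p1sq: "psum N 1 ^ 2 = hh N + ee N"
proof -
  have "psum N 1 ^ 2 = (\<Sum>a<N. \<Sum>b<N. mm a b)"
    unfolding psum1 power2_eq_square sum_product by (simp add: mono_mult)
  also have "\<dots> = hh N + ee N"
    unfolding hh_def ee_def XP_def sum.distrib[symmetric] by (intro sum.cong refl) auto
  finally show ?thesis .
qed

lemma p2: "psum N 2 = hh N - ee N"
proof -
  define L where "L = (\<Sum>a<N. \<Sum>b<N. if a < b then mm a b else 0)"
  have "hh N = (\<Sum>a<N. \<Sum>b<N. (if a = b then mm a b else 0) + (if a < b then mm a b else 0))"
    unfolding hh_def XP_def by (intro sum.cong refl) auto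
  also have "\<dots> = (\<Sum>a<N. mm a a) + L"
    unfolding L_def sum.distrib by simp
  finally have h: "hh N = (\<Sum>a<N. mm a a) + L" .
  have "ee N = (\<Sum>b<N. \<Sum>a<N. if b < a then mm a b else 0)"
    unfolding ee_def XP_def by (rule sum.swap)
  also have "\<dots> = L" unfolding L_def by (intro sum.cong refl) (simp add: add.commute)
  finally have e: "ee N = L" .
  have "psum N 2 = (\<Sum>a<N. mm a a)"
    by (simp add: psum_def var_pow_def single_add[symmetric] numeral_2_eq_2)
  then show ?thesis using h e by simp
qed

lemma mdeg_K: "finite K \<Longrightarrow> Poly_Mapping.keys a \<subseteq> K \<Longrightarrow> mdeg a = (\<Sum>i\<in>K. Poly_Mapping.lookup a i)"
  unfolding mdeg_def by (rule sum.mono_neutral_left) (auto simp: in_keys_iff)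

lemma mdeg_add: "mdeg (a + b) = mdeg a + mdeg b"
proof -
  let ?K = "Poly_Mapping.keys a \<union> Poly_Mapping.keys b"
  have "mdeg (a + b) = (\<Sum>i\<in>?K. Poly_Mapping.lookup (a + b) i)"
    by (rule mdeg_K) (auto dest: subsetD[OF keys_add])
  also have "\<dots> = (\<Sum>i\<in>?K. Poly_Mapping.lookup a i) + (\<Sum>i\<in>?K. Poly_Mapping.lookup b i)"
    by (simp add: lookup_add sum.distrib)
  also have "\<dots> = mdeg a + mdeg b" by (simp add: mdeg_K[symmetric])
  finally show ?thesis .
qed

lemma mdeg_single: "mdeg (Poly_Mapping.single a n) = n"
  by (simp add: mdeg_def)

lemma mdeg0: assumes "mdeg a = 0" shows "a = 0"
proof -
  have "\<forall>k. Poly_Mapping.lookup a k = 0" using assms unfolding mdeg_def by (simp add: in_keys_iff)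
  then show ?thesis by (intro poly_mapping_eqI) simp
qed

lemma split1: fixes a :: "nat \<Rightarrow>\<^sub>0 nat" shows "x \<in> Poly_Mapping.keys a \<Longrightarrow> a = Poly_Mapping.single x 1 + (a - Poly_Mapping.single x 1)"
proof (rule poly_mapping_eqI)
  fix k assume x: "x \<in> Poly_Mapping.keys a"
  show "Poly_Mapping.lookup a k = Poly_Mapping.lookup (Poly_Mapping.single x 1 + (a - Poly_Mapping.single x 1)) k"
  proof (cases "k = x")
    case True
    then have ne: "Poly_Mapping.lookup a k \<noteq> 0" using x by (simp add: in_keys_iff)
    have "Poly_Mapping.lookup (Poly_Mapping.single x 1 + (a - Poly_Mapping.single x 1)) k = 1 + (Poly_Mapping.lookup a k - 1)"
      using True by (simp add: lookup_add lookup_minus)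
    then show ?thesis using ne by arith
  qed (simp add: lookup_add lookup_minus lookup_single)
qed

lemma keys_minus_sub: "Poly_Mapping.keys (a - Poly_Mapping.single x (1::nat)) \<subseteq> Poly_Mapping.keys a"
  by (auto simp: in_keys_iff lookup_minus)

lemma deg2_decomp: assumes "mdeg a = 2"
  shows "\<exists>x y. x \<in> Poly_Mapping.keys a \<and> y \<in> Poly_Mapping.keys a \<and> a = Poly_Mapping.single x 1 + Poly_Mapping.single y 1"
proof -
  have "a \<noteq> 0" using assms by (auto simp: mdeg_def)
  then obtain x where x: "x \<in> Poly_Mapping.keys a" by fastforce
  define b where "b = a - Poly_Mapping.single x 1"
  have ab: "a = Poly_Mapping.single x 1 + b" using split1[OF x] b_def by simp
  then have "mdeg b = 1" using assms mdeg_add[of "Poly_Mapping.single x 1" b] by (simp add: mdeg_single)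
  then have "b \<noteq> 0" by (auto simp: mdeg_def)
  then obtain y where y: "y \<in> Poly_Mapping.keys b" by fastforce
  define c where "c = b - Poly_Mapping.single y 1"
  have bc: "b = Poly_Mapping.single y 1 + c" using split1[OF y] c_def by simp
  then have "mdeg c = 0" using \<open>mdeg b = 1\<close> mdeg_add[of "Poly_Mapping.single y 1" c] by (simp add: mdeg_single)
  then have "c = 0" by (rule mdeg0)
  have "y \<in> Poly_Mapping.keys a" using y keys_minus_sub[of a x] b_def by auto
  then show ?thesis using x ab bc \<open>c = 0\<close> by auto
qed

lemma pair_inj: fixes a b a' b' :: nat assumes "a \<le> b" "a' \<le> b'"
  and eq: "Poly_Mapping.single a (1::nat) + Poly_Mapping.single b 1 = Poly_Mapping.single a' 1 + Poly_Mapping.single b' 1"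
  shows "a = a' \<and> b = b'"
proof -
  have L: "(if a = k then 1 else 0) + (if b = k then 1 else 0) = (if a' = k then 1 else (0::nat)) + (if b' = k then 1 else 0)" for k
  proof -
    have "Poly_Mapping.lookup (Poly_Mapping.single a (1::nat) + Poly_Mapping.single b 1) k = Poly_Mapping.lookup (Poly_Mapping.single a' 1 + Poly_Mapping.single b' 1) k"
      using eq by simp
    then show ?thesis by (simp only: lookup_add lookup_single when_def)
  qed
  show ?thesis
  proof (cases "a = a'")
    case True
    then show ?thesis using L[of b] by (auto split: if_splits)
  next
    case False
    have "b' = a" using L[of a] False by (auto split: if_splits)
    moreover have "b = a'" using L[of a'] False by (auto split: if_splits)
    ultimately have False using assms(1,2) False by linarith
    then show ?thesis ..
  qed
qed

lemma hcomp2: "hcomp N 2 = hh N"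
proof -
  define Pairs where "Pairs = {(a, b). a \<le> b \<and> b < (N::nat)}"
  define Hs where "Hs = {al. Poly_Mapping.keys al \<subseteq> {..<N} \<and> mdeg al = 2}"
  have bij: "bij_betw (\<lambda>(a, b). Poly_Mapping.single a 1 + Poly_Mapping.single b 1) Pairs Hs"
    unfolding bij_betw_def
  proof (intro conjI)
    show "inj_on (\<lambda>(a, b). Poly_Mapping.single a (1::nat) + Poly_Mapping.single b 1) Pairs"
    proof (rule inj_onI)
      fix p q assume "p \<in> Pairs" "q \<in> Pairs"
        "(\<lambda>(a, b). Poly_Mapping.single a (1::nat) + Poly_Mapping.single b 1) p = (\<lambda>(a, b). Poly_Mapping.single a 1 + Poly_Mapping.single b 1) q"
      then show "p = q" using pair_inj by (cases p; cases q) (auto simp: Pairs_def)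
    qed
    show "(\<lambda>(a, b). Poly_Mapping.single a 1 + Poly_Mapping.single b 1) ` Pairs = Hs"
    proof (intro equalityI subsetI)
      fix al :: "nat \<Rightarrow>\<^sub>0 nat" assume "al \<in> (\<lambda>(a, b). Poly_Mapping.single a 1 + Poly_Mapping.single b 1) ` Pairs"
      then obtain a b where ab: "a \<le> b" "b < N" "al = Poly_Mapping.single a 1 + Poly_Mapping.single b 1"
        by (auto simp: Pairs_def)
      have "Poly_Mapping.keys al \<subseteq> {a, b}" unfolding ab(3)
        by (auto simp: in_keys_iff lookup_add lookup_single when_def split: if_splits)
      then have "Poly_Mapping.keys al \<subseteq> {..<N}" using ab by auto
      moreover have "mdeg al = 2" using ab by (simp add: mdeg_add mdeg_single)
      ultimately show "al \<in> Hs" by (simp add: Hs_def)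
    next
      fix al assume "al \<in> Hs"
      then have k: "Poly_Mapping.keys al \<subseteq> {..<N}" and d: "mdeg al = 2" by (auto simp: Hs_def)
      obtain x y where xy: "x \<in> Poly_Mapping.keys al" "y \<in> Poly_Mapping.keys al" "al = Poly_Mapping.single x 1 + Poly_Mapping.single y 1"
        using deg2_decomp[OF d] by blast
      show "al \<in> (\<lambda>(a, b). Poly_Mapping.single a 1 + Poly_Mapping.single b 1) ` Pairs"
      proof (cases "x \<le> y")
        case True
        then show ?thesis using xy k by (auto simp: Pairs_def intro!: image_eqI[of _ _ "(x, y)"])
      next
        case False
        then show ?thesis using xy k by (auto simp: Pairs_def add.commute intro!: image_eqI[of _ _ "(y, x)"])
      qed
    qed
  qed
  have "hcomp N 2 = (\<Sum>al\<in>Hs. Defs.mono al)" by (simp add: hcomp_def Hs_def)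
  also have "\<dots> = (\<Sum>p\<in>Pairs. Defs.mono ((\<lambda>(a, b). Poly_Mapping.single a 1 + Poly_Mapping.single b 1) p))"
    by (rule sum.reindex_bij_betw[OF bij, symmetric])
  also have "\<dots> = (\<Sum>p\<in>{..<N} \<times> {..<N}. if p \<in> {(a, b). a \<le> b} then Defs.mono ((\<lambda>(a, b). Poly_Mapping.single a 1 + Poly_Mapping.single b 1) p) else 0)"
  proof -
    have "{..<N} \<times> {..<N} \<inter> {(a, b). a \<le> b} = Pairs" by (auto simp: Pairs_def)
    then show ?thesis using sum.inter_restrict[of "{..<N} \<times> {..<N}" "\<lambda>p. Defs.mono ((\<lambda>(a, b). Poly_Mapping.single a 1 + Poly_Mapping.single b 1) p)" "{(a, b). a \<le> b}"]
      by simp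
  qed
  also have "\<dots> = hh N"
    unfolding hh_def XP_def sum.cartesian_product by (intro sum.cong refl) auto
  finally show ?thesis .
qed


lemma psi2_GG: "psi2 N j = GG (hh N + ee N) (hh N - ee N) j"
  unfolding psi2_def GG_def
proof (intro sum.cong refl)
  fix i assume "i \<in> {..j}"
  have eq: "psum N 1 ^ (2 * j - 2 * i) = (psum N 1 ^ 2) ^ (j - i)"
    by (simp add: power_mult[symmetric] diff_mult_distrib2)
  show "psum N 2 ^ i * psum N 1 ^ (2 * j - 2 * i) = (hh N - ee N) ^ i * (hh N + ee N) ^ (j - i)"
    by (simp only: eq p1sq p2)
qed

lemma SP_hpow: "schur_positive N f \<Longrightarrow> schur_positive N (hh N ^ a * f)"
  by (induction a) (auto simp: mult.assoc intro: SP_hh)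

lemma SP_epow: "schur_positive N f \<Longrightarrow> schur_positive N (ee N ^ a * f)"
  by (induction a) (auto simp: mult.assoc intro: SP_ee)

theorem lemma3p3:
  fixes N m k :: nat
  assumes "1 \<le> k" and "k \<le> m"
  shows "schur_positive N (psi2 N m - hcomp N 2 ^ k * psi2 N (m - k))"
proof -
  have "psi2 N m - hcomp N 2 ^ k * psi2 N (m - k) = (\<Sum>j<k. hh N ^ j * QQ (hh N) (ee N) (m - j))"
    unfolding psi2_GG hcomp2 by (rule GG_main[OF spoly_two assms(2)])
  also have "schur_positive N \<dots>"
  proof (rule SP_sum)
    fix j
    show "schur_positive N (hh N ^ j * QQ (hh N) (ee N) (m - j))"
      unfolding QQ_def sum_distrib_left
    proof (rule SP_sum)
      fix i
      have "hh N ^ j * (if even i then of_nat (m - j choose i) * (ee N ^ i * hh N ^ (m - j - i)) else 0) =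
        (if even i then of_nat (m - j choose i) * (hh N ^ (j + (m - j - i)) * (ee N ^ i * 1)) else 0)"
        by (simp add: power_add mult_ac)
      moreover have "schur_positive N (if even i then of_nat (m - j choose i) * (hh N ^ (j + (m - j - i)) * (ee N ^ i * 1)) else 0)"
        by (intro SP_if SP_nat SP_hpow SP_epow SP_one)
      ultimately show "schur_positive N (hh N ^ j * (if even i then of_nat (m - j choose i) * (ee N ^ i * hh N ^ (m - j - i)) else 0))"
        by simp
    qed simp
  qed simp
  finally show ?thesis .
qed

end
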